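(* Let $x$ be a random input with true label $Y$, taking labels in a finite set. Let $S^A_y(x)$ and $S^B_y(x)$ be two real-valued class-score functions, with predictions $\hat y_A(x)=\arg\max_y S^A_y(x)$ and $\hat y_B(x)=\arg\max_y S^B_y(x)$. Define $\Delta_A(x)=S^A_{\hat y_A(x)}(x)-\max_{y\neq\hat y_A(x)}S^A_y(x)$ and $E(x)=\max_y|S^A_y(x)-S^B_y(x)|$. Then for every $t\ge 0$, $$\Pr[\hat y_A(x)\ne\hat y_B(x)]\le\Pr[\Delta_A(x)\le 2t]+\Pr[E(x)>t],$$ and consequently, with $\mathrm{Acc}(A)=\Pr[\hat y_A(x)=Y]$ and $\mathrm{Acc}(B)=\Pr[\hat y_B(x)=Y]$, $$|\mathrm{Acc}(A)-\mathrm{Acc}(B)|\le\Pr[\hat y_A(x)\ne\hat y_B(x)]\le\Pr[\Delta_A(x)\le 2t]+\Pr[E(x)>t].$$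
   Context: The scores $S^A_y,S^B_y$ are cumulative class scores of two classifiers (sums of per-block goodness values); predictions are given by argmax over labels. *)

theory Defs
  imports "HOL-Probability.Probability"
begin

definition margin :: "('y::finite \<Rightarrow> 'x \<Rightarrow> real) \<Rightarrow> 'y \<Rightarrow> 'x \<Rightarrow> real" where
  "margin S yhat x = S yhat x - Max {S y x | y. y \<noteq> yhat}"

definition score_gap :: "('y::finite \<Rightarrow> 'x \<Rightarrow> real) \<Rightarrow> ('y \<Rightarrow> 'x \<Rightarrow> real) \<Rightarrow> 'x \<Rightarrow> real" where
  "score_gap SA SB x = Max (range (\<lambda>y. \<bar>SA y x - SB y x\<bar>))"

end

theory Submission
  imports Defs
begin

lemma margin_alt: "margin S yh x = S yh x - Max ((\<lambda>i. S i x) ` {i. i \<noteq> yh})"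
  unfolding margin_def by (simp add: setcompr_eq_image)

theorem proposition2:
  fixes M :: "'w measure" and N :: "'x measure"
    and X :: "'w \<Rightarrow> 'x" and Y :: "'w \<Rightarrow> 'y::finite"
    and SA SB :: "'y \<Rightarrow> 'x \<Rightarrow> real"
    and yA yB :: "'x \<Rightarrow> 'y"
    and t :: real
  assumes "prob_space M"
    and "CARD('y) \<ge> 2"
    and "X \<in> measurable M N"
    and "Y \<in> measurable M (count_space UNIV)"
    and "\<And>y. SA y \<in> borel_measurable N"
    and "\<And>y. SB y \<in> borel_measurable N"
    and "yA \<in> measurable N (count_space UNIV)"
    and "yB \<in> measurable N (count_space UNIV)"
    and argmaxA: "\<And>x y. SA y x \<le> SA (yA x) x"
    and argmaxB: "\<And>x y. SB y x \<le> SB (yB x) x"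
    and "t \<ge> 0"
  shows "(measure M {w \<in> space M. yA (X w) \<noteq> yB (X w)}
           \<le> measure M {w \<in> space M. margin SA (yA (X w)) (X w) \<le> 2 * t}
             + measure M {w \<in> space M. score_gap SA SB (X w) > t})
         \<and> (\<bar>measure M {w \<in> space M. yA (X w) = Y w} - measure M {w \<in> space M. yB (X w) = Y w}\<bar>
           \<le> measure M {w \<in> space M. yA (X w) \<noteq> yB (X w)})"
proof -
  interpret P: prob_space M by fact
  have yAm: "(\<lambda>w. yA (X w)) \<in> measurable M (count_space UNIV)"
    using assms(3,7) by (rule measurable_comp[unfolded comp_def])
  have yBm: "(\<lambda>w. yB (X w)) \<in> measurable M (count_space UNIV)"
    using assms(3,8) by (rule measurable_comp[unfolded comp_def])
  have mg: "(\<lambda>x. margin SA y x) \<in> borel_measurable N" for y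
    unfolding margin_alt using assms(5) by (intro borel_measurable_diff borel_measurable_Max) auto
  have mg2: "(\<lambda>x. margin SA (yA x) x) \<in> borel_measurable N"
    by (rule measurable_compose_countable'[where I=UNIV, OF mg]) (use assms(7) in auto)
  have mgw: "(\<lambda>w. margin SA (yA (X w)) (X w)) \<in> borel_measurable M"
    using assms(3) mg2 by (rule measurable_comp[unfolded comp_def])
  have sg: "score_gap SA SB \<in> borel_measurable N"
    unfolding score_gap_def using assms(5,6) by (intro borel_measurable_Max borel_measurable_abs borel_measurable_diff) auto
  have sgw: "(\<lambda>w. score_gap SA SB (X w)) \<in> borel_measurable M"
    using assms(3) sg by (rule measurable_comp[unfolded comp_def])
  let ?D = "{w \<in> space M. yA (X w) \<noteq> yB (X w)}"
  let ?U = "{w \<in> space M. margin SA (yA (X w)) (X w) \<le> 2 * t}"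
  let ?V = "{w \<in> space M. score_gap SA SB (X w) > t}"
  have Dm: "?D \<in> sets M" using yAm yBm by measurable
  have Um: "?U \<in> sets M" using mgw by measurable
  have Vm: "?V \<in> sets M" using sgw by measurable
  have sub: "?D \<subseteq> ?U \<union> ?V"
  proof
    fix w assume w: "w \<in> ?D"
    show "w \<in> ?U \<union> ?V"
    proof (cases "score_gap SA SB (X w) > t")
      case True then show ?thesis using w by auto
    next
      case False
      let ?x = "X w"
      have gap: "\<bar>SA y ?x - SB y ?x\<bar> \<le> t" for y
      proof -
        have "\<bar>SA y ?x - SB y ?x\<bar> \<le> score_gap SA SB ?x" unfolding score_gap_def by (rule Max_ge) auto
        thus ?thesis using False by linarith
      qed
      have ne: "yB ?x \<noteq> yA ?x" using w by auto
      have "SA (yB ?x) ?x \<le> Max ((\<lambda>i. SA i ?x) ` {i. i \<noteq> yA ?x})"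
        using ne by (intro Max_ge) auto
      hence "margin SA (yA ?x) ?x \<le> SA (yA ?x) ?x - SA (yB ?x) ?x"
        unfolding margin_alt by linarith
      also have "\<dots> \<le> 2 * t"
        using gap[of "yA ?x"] gap[of "yB ?x"] argmaxB[of "yA ?x" ?x] by linarith
      finally show ?thesis using w by auto
    qed
  qed
  have part1: "measure M ?D \<le> measure M ?U + measure M ?V"
  proof -
    have "measure M ?D \<le> measure M (?U \<union> ?V)"
      using sub Um Vm by (intro P.finite_measure_mono) auto
    also have "\<dots> \<le> measure M ?U + measure M ?V"
      using Um Vm by (rule measure_Un_le)
    finally show ?thesis .
  qed
  let ?A = "{w \<in> space M. yA (X w) = Y w}"
  let ?B = "{w \<in> space M. yB (X w) = Y w}"
  have Am: "?A \<in> sets M" using yAm assms(4) by measurable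
  have Bm: "?B \<in> sets M" using yBm assms(4) by measurable
  have "measure M ?A \<le> measure M (?B \<union> ?D)"
    using Bm Dm by (intro P.finite_measure_mono) auto
  also have "\<dots> \<le> measure M ?B + measure M ?D"
    using Bm Dm by (rule measure_Un_le)
  finally have 1: "measure M ?A \<le> measure M ?B + measure M ?D" .
  have "measure M ?B \<le> measure M (?A \<union> ?D)"
    using Am Dm by (intro P.finite_measure_mono) auto
  also have "\<dots> \<le> measure M ?A + measure M ?D"
    using Am Dm by (rule measure_Un_le)
  finally have 2: "measure M ?B \<le> measure M ?A + measure M ?D" .
  show ?thesis using part1 1 2 by linarith
qed

end
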